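(* For all $M\geq 2$: (1) $g(M)=F_M+\sum_{k=1}^{M-1}F_kF_{M-k}$; (2) $h(M)=F_M+\sum_{k=1}^{M-2}F_kF_{M-1-k}$; (3) $g_1(M)=h_1(M)=\sum_{k=1}^{M-1}F_kF_{M-k}$; (4) $g(M)-h(M)=g_1(M)-g_1(M-1)=h_1(M)-h_1(M-1)=F_{M-1}+\sum_{k=1}^{M-3}F_kF_{M-2-k}$ (with $g_1(0)=h_1(0)=0$ if needed, and empty sums equal to $0$).
   Context: $F_k$ denotes the Fibonacci numbers with $F_{-1}=1$, $F_0=0$, $F_1=1$, $F_k=F_{k-1}+F_{k-2}$. The perimeter of a nonempty partition $\lambda$ with largest part $\lambda_1$ and $\ell(\lambda)$ parts is $\lambda_1+\ell(\lambda)-1$. $\mathcal G(M)$ is the set of partitions into odd parts with perimeter $M$, $\mathcal H(M)$ the set of partitions into distinct parts with perimeter $M$; $g(M)$ (resp. $h(M)$) is the total number of parts, summed over all partitions in $\mathcal G(M)$ (resp. $\mathcal H(M)$). $\mathcal G_1(M)$ is the set of partitions with perimeter $M$ in which exactly one distinct even integer occurs as a part (possibly with multiplicity greater than one) and all other parts are odd; $\mathcal H_1(M)$ is the set of partitions with perimeter $M$ in which exactly one part value occurs at least twice and every other part value occurs exactly once. $g_1(M)=|\mathcal G_1(M)|$, $h_1(M)=|\mathcal H_1(M)|$. *)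

theory Defs
  imports "HOL-Library.Multiset" "HOL-Number_Theory.Fib"
begin

text \<open>A (nonempty) partition is a nonempty finite multiset of positive integers.
  Fibonacci numbers F_k are the library's fib k (fib 0 = 0, fib 1 = 1).\<close>

definition is_partition :: "nat multiset \<Rightarrow> bool" where
  "is_partition p \<longleftrightarrow> p \<noteq> {#} \<and> (\<forall>x\<in>#p. 0 < x)"

definition perimeter :: "nat multiset \<Rightarrow> nat" where
  "perimeter p = Max_mset p + size p - 1"

definition Gset :: "nat \<Rightarrow> nat multiset set" where
  "Gset M = {p. is_partition p \<and> (\<forall>x\<in>#p. odd x) \<and> perimeter p = M}"

definition Hset :: "nat \<Rightarrow> nat multiset set" where
  "Hset M = {p. is_partition p \<and> (\<forall>x\<in>#p. count p x = 1) \<and> perimeter p = M}"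

definition G1set :: "nat \<Rightarrow> nat multiset set" where
  "G1set M = {p. is_partition p \<and> perimeter p = M \<and>
      (\<exists>!e. e \<in># p \<and> even e)}"

definition H1set :: "nat \<Rightarrow> nat multiset set" where
  "H1set M = {p. is_partition p \<and> perimeter p = M \<and>
      (\<exists>!v. v \<in># p \<and> 2 \<le> count p v)}"

definition g :: "nat \<Rightarrow> nat" where "g M = (\<Sum>p\<in>Gset M. size p)"
definition h :: "nat \<Rightarrow> nat" where "h M = (\<Sum>p\<in>Hset M. size p)"
definition g1 :: "nat \<Rightarrow> nat" where "g1 M = card (G1set M)"
definition h1 :: "nat \<Rightarrow> nat" where "h1 M = card (H1set M)"

end

theory Submission imports Defs begin

definition up :: "nat \<Rightarrow> nat multiset \<Rightarrow> nat multiset" where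
  "up k p = image_mset (\<lambda>x. x + k) p"
definition dn :: "nat \<Rightarrow> nat multiset \<Rightarrow> nat multiset" where
  "dn k p = image_mset (\<lambda>x. x - k) p"

lemma dn_up[simp]: "dn k (up k p) = p"
  by (simp add: dn_def up_def multiset.map_comp o_def)

lemma up_dn: "(\<And>x. x \<in># p \<Longrightarrow> k \<le> x) \<Longrightarrow> up k (dn k p) = p"
  unfolding dn_def up_def multiset.map_comp o_def
  by (rule trans[OF image_mset_cong[where g=id]]) auto

lemma mem_up: "x \<in># up k p \<longleftrightarrow> (\<exists>y. y \<in># p \<and> x = y + k)"
  by (auto simp: up_def)

lemma size_up[simp]: "size (up k p) = size p" by (simp add: up_def)
lemma up_empty[simp]: "up k p = {#} \<longleftrightarrow> p = {#}" by (simp add: up_def)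

lemma count_up: "count (up k p) (y + k) = count p y"
  by (induction p) (auto simp: up_def)

lemma Max_up: "p \<noteq> {#} \<Longrightarrow> Max_mset (up k p) = Max_mset p + k"
proof -
  assume "p \<noteq> {#}"
  have "mono (\<lambda>x::nat. x + k)" by (simp add: mono_def)
  from mono_Max_commute[OF this, of "set_mset p"] \<open>p \<noteq> {#}\<close>
  show ?thesis by (simp add: up_def)
qed

lemma Max_add: "q \<noteq> {#} \<Longrightarrow> Max_mset (add_mset x q) = max x (Max_mset q)"
  by (simp add: Max_insert)

lemma Max_ge: "x \<in># q \<Longrightarrow> x \<le> Max_mset q" by simp

lemma part_nonempty: "is_partition p \<Longrightarrow> p \<noteq> {#}" by (simp add: is_partition_def)

lemma perim_iff: "is_partition p \<Longrightarrow> perimeter p = M \<longleftrightarrow> Max_mset p + size p = M + 1"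
proof -
  assume a: "is_partition p"
  then have "p \<noteq> {#}" by (simp add: is_partition_def)
  then have "size p \<ge> 1" by (simp add: Suc_leI nonempty_has_size)
  then show ?thesis by (auto simp: perimeter_def)
qed

lemma Max_pos: "is_partition p \<Longrightarrow> Max_mset p \<ge> 1"
proof -
  assume a: "is_partition p"
  then have "Max_mset p \<in># p" using Max_in_mset part_nonempty by blast
  with a show ?thesis by (auto simp: is_partition_def Suc_le_eq)
qed

lemma size_pos: "p \<noteq> {#} \<Longrightarrow> size p \<ge> 1"
  by (simp add: Suc_leI nonempty_has_size)

lemma perim_ge1: "is_partition p \<Longrightarrow> perimeter p \<ge> 1"
  using Max_pos[of p] size_pos[of p] part_nonempty[of p] by (simp add: perimeter_def)

lemma part_up: "is_partition q \<Longrightarrow> is_partition (up k q)"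
  by (auto simp: is_partition_def up_def)

lemma part_add: "is_partition q \<Longrightarrow> 0 < x \<Longrightarrow> is_partition (add_mset x q)"
  by (auto simp: is_partition_def)

lemma part_one: "is_partition p \<Longrightarrow> perimeter p = 1 \<Longrightarrow> p = {#1#}"
proof -
  assume a: "is_partition p" "perimeter p = 1"
  then have "Max_mset p + size p = 2" using perim_iff by auto
  moreover have "Max_mset p \<ge> 1" "size p \<ge> 1" using a Max_pos size_pos part_nonempty by auto
  ultimately have s: "size p = 1" and m: "Max_mset p = 1" by auto
  from s obtain x where "p = {#x#}" using size_1_singleton_mset by blast
  with m show ?thesis by simp
qed

definition PS :: "nat \<Rightarrow> nat multiset set" where
  "PS M = {p. is_partition p \<and> perimeter p = M}"

lemma finite_PS: "finite (PS M)"
proof -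
  have "PS M \<subseteq> (\<Union>n\<in>{0..M}. multisets_of_size {0..M} n)"
  proof
    fix p assume "p \<in> PS M"
    then have a: "is_partition p" "Max_mset p + size p = M + 1" using perim_iff[of p M] by (auto simp: PS_def)
    then have "Max_mset p \<ge> 1" "size p \<ge> 1" using Max_pos size_pos part_nonempty by auto
    have "size p \<le> M" using a(2) \<open>Max_mset p \<ge> 1\<close> by linarith
    moreover have "\<forall>x\<in>#p. x \<le> M"
    proof
      fix x assume "x \<in># p"
      then have "x \<le> Max_mset p" by simp
      then show "x \<le> M" using a(2) \<open>size p \<ge> 1\<close> by linarith
    qed
    ultimately
    show "p \<in> (\<Union>n\<in>{0..M}. multisets_of_size {0..M} n)"
      by (auto simp: multisets_of_size_def)
  qed
  then show ?thesis by (rule finite_subset) auto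
qed



lemma perim_add: "q \<noteq> {#} \<Longrightarrow> perimeter (add_mset x q) = max x (Max_mset q) + size q"
  by (simp add: perimeter_def Max_add)

lemma perim_up: "is_partition q \<Longrightarrow> perimeter (up k q) = perimeter q + k"
  using Max_pos[of q] size_pos[of q] part_nonempty[of q]
  by (simp add: perimeter_def Max_up)

lemma Gset_fin: "finite (Gset M)"
  by (rule finite_subset[OF _ finite_PS[of M]]) (auto simp: Gset_def PS_def)
lemma Hset_fin: "finite (Hset M)"
  by (rule finite_subset[OF _ finite_PS[of M]]) (auto simp: Hset_def PS_def)
lemma G1set_fin: "finite (G1set M)"
  by (rule finite_subset[OF _ finite_PS[of M]]) (auto simp: G1set_def PS_def)
lemma H1set_fin: "finite (H1set M)"
  by (rule finite_subset[OF _ finite_PS[of M]]) (auto simp: H1set_def PS_def)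

lemma odd3: "odd (x::nat) \<Longrightarrow> x \<noteq> 1 \<Longrightarrow> 3 \<le> x" by presburger

lemma odd3m: "\<forall>x\<in>#p. odd (x::nat) \<Longrightarrow> 1 \<notin># p \<Longrightarrow> \<forall>x\<in>#p. 3 \<le> x"
proof
  fix x assume "\<forall>x\<in>#p. odd (x::nat)" "1 \<notin># p" "x \<in># p"
  then have "odd x" "x \<noteq> 1" by auto
  then show "3 \<le> x" by (rule odd3)
qed

lemma GA: assumes "M \<ge> 2"
  shows "bij_betw (add_mset 1) (Gset (M-1)) {p\<in>Gset M. 1 \<in># p}"
proof (rule bij_betw_byWitness[where f'="\<lambda>p. p - {#1#}"])
  show "\<forall>a\<in>Gset (M - 1). add_mset 1 a - {#1#} = a" by simp
  show "\<forall>a'\<in>{p \<in> Gset M. 1 \<in># p}. add_mset 1 (a' - {#1#}) = a'" by simp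
  show "add_mset 1 ` Gset (M - 1) \<subseteq> {p \<in> Gset M. 1 \<in># p}"
  proof
    fix p assume "p \<in> add_mset 1 ` Gset (M - 1)"
    then obtain q where p: "p = add_mset 1 q" and q: "q \<in> Gset (M-1)" by auto
    from q have qp: "is_partition q" "\<forall>x\<in>#q. odd x" "perimeter q = M - 1" by (auto simp: Gset_def)
    have "perimeter p = M" using perim_add[of q 1] qp Max_pos[of q] part_nonempty[of q] assms
      unfolding p by (simp add: perimeter_def)
    then show "p \<in> {p \<in> Gset M. 1 \<in># p}" using qp part_add[of q 1] by (auto simp: p Gset_def)
  qed
  show "(\<lambda>p. p - {#1#}) ` {p \<in> Gset M. 1 \<in># p} \<subseteq> Gset (M - 1)"
  proof
    fix q assume "q \<in> (\<lambda>p. p - {#1#}) ` {p \<in> Gset M. 1 \<in># p}"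
    then obtain p where q: "q = p - {#1#}" and p: "p \<in> Gset M" "1 \<in># p" by auto
    have pq: "p = add_mset 1 q" using p q by simp
    from p have pp: "is_partition p" "\<forall>x\<in>#p. odd x" "perimeter p = M" by (auto simp: Gset_def)
    have qne: "q \<noteq> {#}"
    proof
      assume "q = {#}"
      then have "p = {#1#}" using pq by simp
      then show False using pp assms by (simp add: perimeter_def)
    qed
    have qpart: "is_partition q" using pp qne by (auto simp: is_partition_def q dest: in_diffD)
    have "perimeter q = M - 1" using perim_add[OF qne, of 1] pp(3) Max_pos[OF qpart] size_pos[OF qne]
      unfolding pq by (simp add: perimeter_def)
    then show "q \<in> Gset (M-1)" using qpart pp by (auto simp: Gset_def q dest: in_diffD)
  qed
qed

lemma GB: "bij_betw (up 2) (Gset (M-2)) {p\<in>Gset M. 1 \<notin># p}"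
proof (rule bij_betw_byWitness[where f'="dn 2"])
  show "\<forall>a\<in>Gset (M - 2). dn 2 (up 2 a) = a" by simp
  show "\<forall>a'\<in>{p \<in> Gset M. 1 \<notin># p}. up 2 (dn 2 a') = a'"
  proof
    fix p assume "p \<in> {p \<in> Gset M. 1 \<notin># p}"
    then have "\<forall>x\<in>#p. 3 \<le> x" by (intro odd3m) (auto simp: Gset_def)
    then show "up 2 (dn 2 p) = p" by (intro up_dn) auto
  qed
  show "up 2 ` Gset (M - 2) \<subseteq> {p \<in> Gset M. 1 \<notin># p}"
  proof
    fix p assume "p \<in> up 2 ` Gset (M - 2)"
    then obtain q where p: "p = up 2 q" and q: "q \<in> Gset (M-2)" by auto
    from q have qp: "is_partition q" "\<forall>x\<in>#q. odd x" "perimeter q = M - 2" by (auto simp: Gset_def)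
    have "perimeter q \<ge> 1" using perim_ge1[OF qp(1)] qp by auto
    moreover have "perimeter p = perimeter q + 2" using perim_up[OF qp(1), of 2] p by simp
    ultimately have "perimeter p = M" using qp(3) by linarith
    moreover have "\<forall>x\<in>#p. odd x \<and> x \<noteq> 1" using qp(2) by (auto simp: p up_def)
    moreover have "is_partition p" using part_up[OF qp(1), of 2] p by simp
    ultimately show "p \<in> {p \<in> Gset M. 1 \<notin># p}" by (auto simp: Gset_def)
  qed
  show "dn 2 ` {p \<in> Gset M. 1 \<notin># p} \<subseteq> Gset (M - 2)"
  proof
    fix q assume "q \<in> dn 2 ` {p \<in> Gset M. 1 \<notin># p}"
    then obtain p where q: "q = dn 2 p" and p: "p \<in> Gset M" "1 \<notin># p" by auto
    from p have pp: "is_partition p" "\<forall>x\<in>#p. odd x" "perimeter p = M" by (auto simp: Gset_def)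
    have ge: "\<forall>x\<in>#p. 3 \<le> x" using pp p(2) odd3m by blast
    then have pq: "p = up 2 q" unfolding q by (intro up_dn[symmetric]) auto
    have qpart: "is_partition q" using pp ge unfolding q dn_def is_partition_def by auto
    have "perimeter q = M - 2" using perim_up[OF qpart, of 2] pp(3) pq by simp
    moreover have "\<forall>x\<in>#q. odd x" using pp ge unfolding q dn_def by auto
    ultimately show "q \<in> Gset (M-2)" using qpart by (auto simp: Gset_def)
  qed
qed



lemma card_split: "finite S \<Longrightarrow> card S = card {p\<in>S. P p} + card {p\<in>S. \<not> P p}"
proof -
  assume "finite S"
  have "S = {p\<in>S. P p} \<union> {p\<in>S. \<not> P p}" by blast
  moreover have "card ({p\<in>S. P p} \<union> {p\<in>S. \<not> P p}) = card {p\<in>S. P p} + card {p\<in>S. \<not> P p}"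
    by (rule card_Un_disjoint) (use \<open>finite S\<close> in auto)
  ultimately show ?thesis by simp
qed

lemma sum_split: "finite S \<Longrightarrow> sum w S = sum w {p\<in>S. P p} + sum w {p\<in>S. \<not> P p}"
proof -
  assume "finite S"
  have "S = {p\<in>S. P p} \<union> {p\<in>S. \<not> P p}" by blast
  moreover have "sum w ({p\<in>S. P p} \<union> {p\<in>S. \<not> P p}) = sum w {p\<in>S. P p} + sum w {p\<in>S. \<not> P p}"
    by (rule sum.union_disjoint) (use \<open>finite S\<close> in auto)
  ultimately show ?thesis by simp
qed

lemma Gset0: "Gset 0 = {}" using perim_ge1 by (fastforce simp: Gset_def)
lemma Gset1: "Gset 1 = {{#1#}}"
proof -
  have "Gset 1 \<subseteq> {{#1#}}" using part_one by (auto simp: Gset_def)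
  moreover have "{#1#} \<in> Gset 1" by (simp add: Gset_def is_partition_def perimeter_def)
  ultimately show ?thesis by blast
qed

lemma G_rec: assumes "M \<ge> 2"
  shows "card (Gset M) = card (Gset (M-1)) + card (Gset (M-2))"
    and "g M = g (M-1) + card (Gset (M-1)) + g (M-2)"
proof -
  have c1: "card {p\<in>Gset M. 1 \<in># p} = card (Gset (M-1))" using bij_betw_same_card[OF GA[OF assms]] by simp
  have c2: "card {p\<in>Gset M. 1 \<notin># p} = card (Gset (M-2))" using bij_betw_same_card[OF GB] by simp
  show "card (Gset M) = card (Gset (M-1)) + card (Gset (M-2))"
    using card_split[OF Gset_fin, of M "\<lambda>p. 1 \<in># p"] c1 c2 by simp
  have s1: "sum size {p\<in>Gset M. 1 \<in># p} = sum (\<lambda>q. size (add_mset 1 q)) (Gset (M-1))"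
    using sum.reindex_bij_betw[OF GA[OF assms], of size] by simp
  have s2: "sum size {p\<in>Gset M. 1 \<notin># p} = sum (\<lambda>q. size (up 2 q)) (Gset (M-2))"
    using sum.reindex_bij_betw[OF GB, of size] by simp
  have "sum (\<lambda>q. size (add_mset 1 q)) (Gset (M-1)) = g (M-1) + card (Gset (M-1))"
    by (simp add: g_def sum_Suc)
  then show "g M = g (M-1) + card (Gset (M-1)) + g (M-2)"
    using sum_split[OF Gset_fin, of size M "\<lambda>p. 1 \<in># p"] s1 s2 by (simp add: g_def)
qed

lemma G_card: "card (Gset M) = fib M"
proof (induction M rule: fib.induct)
  case 1 then show ?case by (simp add: Gset0)
next
  case 2
  have "card (Gset 1) = 1" unfolding Gset1 by simp
  then show ?case by (simp add: One_nat_def)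
next
  case (3 n) then show ?case using G_rec(1)[of "Suc (Suc n)"] by simp
qed



lemma perim_addx: "is_partition q \<Longrightarrow> x \<le> Max_mset q \<Longrightarrow> perimeter (add_mset x q) = perimeter q + 1"
  using part_nonempty[of q] size_pos[of q] Max_pos[of q] by (simp add: perim_add perimeter_def max_def)

lemma perim_add1: "is_partition q \<Longrightarrow> perimeter (add_mset 1 q) = perimeter q + 1"
  using perim_addx Max_pos by blast

lemma perim_a1u1: "is_partition q \<Longrightarrow> perimeter (add_mset 1 (up 1 q)) = perimeter q + 2"
  using perim_add1[OF part_up[of q 1]] perim_up[of q 1] by simp

lemma perim_a2u2: "is_partition q \<Longrightarrow> perimeter (add_mset 2 (up 2 q)) = perimeter q + 3"
proof -
  assume q: "is_partition q"
  have "2 \<le> Max_mset (up 2 q)" using Max_up[OF part_nonempty[OF q], of 2] by simp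
  then show ?thesis using perim_addx[OF part_up[OF q], of 2] perim_up[OF q, of 2] by simp
qed

lemma mem_up2: "y \<in># q \<Longrightarrow> y + k \<in># up k q" by (auto simp: up_def)

lemma dist_up: "\<forall>x\<in>#q. count q x = 1 \<Longrightarrow> \<forall>x\<in>#up k q. count (up k q) x = 1"
proof
  fix x assume d: "\<forall>x\<in>#q. count q x = 1" and "x \<in># up k q"
  then obtain y where "y \<in># q" "x = y + k" using mem_up by blast
  then show "count (up k q) x = 1" using count_up[of k q y] d by simp
qed

lemma dist_dn: "\<forall>x\<in>#r. k \<le> x \<Longrightarrow> \<forall>x\<in>#r. count r x = 1 \<Longrightarrow> \<forall>y\<in>#dn k r. count (dn k r) y = 1"
proof
  fix y assume k: "\<forall>x\<in>#r. k \<le> x" and d: "\<forall>x\<in>#r. count r x = 1" and y: "y \<in># dn k r"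
  have r: "up k (dn k r) = r" using k up_dn by blast
  have "y + k \<in># r" using mem_up2[OF y, of k] r by simp
  then show "count (dn k r) y = 1" using count_up[of k "dn k r" y] r d by simp
qed

lemma part_dn: "is_partition r \<Longrightarrow> \<forall>x\<in>#r. k < x \<Longrightarrow> is_partition (dn k r)"
  by (auto simp: is_partition_def dn_def)

lemma up_ge: "is_partition q \<Longrightarrow> \<forall>x\<in>#up k q. k < x"
  by (auto simp: is_partition_def up_def)

lemma HB: "bij_betw (up 1) (Hset (M-1)) {p\<in>Hset M. 1 \<notin># p}"
proof (rule bij_betw_byWitness[where f'="dn 1"])
  show "\<forall>a\<in>Hset (M - 1). dn 1 (up 1 a) = a" by simp
  show "\<forall>a'\<in>{p \<in> Hset M. 1 \<notin># p}. up 1 (dn 1 a') = a'"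
  proof
    fix p assume "p \<in> {p \<in> Hset M. 1 \<notin># p}"
    then have "is_partition p" "1 \<notin># p" by (auto simp: Hset_def)
    then have "\<forall>x\<in>#p. 1 \<le> x" by (auto simp: is_partition_def)
    then show "up 1 (dn 1 p) = p" by (intro up_dn) auto
  qed
  show "up 1 ` Hset (M - 1) \<subseteq> {p \<in> Hset M. 1 \<notin># p}"
  proof
    fix p assume "p \<in> up 1 ` Hset (M - 1)"
    then obtain q where p: "p = up 1 q" and q: "q \<in> Hset (M-1)" by auto
    from q have qp: "is_partition q" "\<forall>x\<in>#q. count q x = 1" "perimeter q = M - 1" by (auto simp: Hset_def)
    have "perimeter q \<ge> 1" using perim_ge1[OF qp(1)] by simp
    moreover have "perimeter p = perimeter q + 1" using perim_up[OF qp(1), of 1] p by simp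
    ultimately have "perimeter p = M" using qp(3) by linarith
    moreover have "1 \<notin># p" using up_ge[OF qp(1), of 1] p by auto
    moreover have "is_partition p" using part_up[OF qp(1), of 1] p by simp
    moreover have "\<forall>x\<in>#p. count p x = 1" using dist_up[OF qp(2), of 1] p by simp
    ultimately show "p \<in> {p \<in> Hset M. 1 \<notin># p}" by (simp add: Hset_def)
  qed
  show "dn 1 ` {p \<in> Hset M. 1 \<notin># p} \<subseteq> Hset (M - 1)"
  proof
    fix q assume "q \<in> dn 1 ` {p \<in> Hset M. 1 \<notin># p}"
    then obtain p where q: "q = dn 1 p" and p: "p \<in> Hset M" "1 \<notin># p" by auto
    from p have pp: "is_partition p" "\<forall>x\<in>#p. count p x = 1" "perimeter p = M" by (auto simp: Hset_def)
    have ge: "\<forall>x\<in>#p. 1 < x"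
    proof
      fix x assume "x \<in># p"
      then have "0 < x" "x \<noteq> 1" using pp(1) p(2) by (auto simp: is_partition_def)
      then show "1 < x" by linarith
    qed
    then have pq: "p = up 1 q" unfolding q by (intro up_dn[symmetric]) auto
    have qpart: "is_partition q" using part_dn[OF pp(1) ge] q by simp
    have "perimeter q = M - 1" using perim_up[OF qpart, of 1] pp(3) pq by simp
    moreover have "\<forall>x\<in>#p. 1 \<le> x" using ge by auto
    then have "\<forall>x\<in>#q. count q x = 1" using dist_dn[OF _ pp(2), of 1] q by simp
    ultimately show "q \<in> Hset (M-1)" using qpart by (auto simp: Hset_def)
  qed
qed

lemma HA: assumes "M \<ge> 2"
  shows "bij_betw (\<lambda>q. add_mset 1 (up 1 q)) (Hset (M-2)) {p\<in>Hset M. 1 \<in># p}"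
proof (rule bij_betw_byWitness[where f'="\<lambda>p. dn 1 (p - {#1#})"])
  show "\<forall>a\<in>Hset (M - 2). dn 1 (add_mset 1 (up 1 a) - {#1#}) = a" by simp
  show "\<forall>p\<in>{p \<in> Hset M. 1 \<in># p}. add_mset 1 (up 1 (dn 1 (p - {#1#}))) = p"
  proof
    fix p assume "p \<in> {p \<in> Hset M. 1 \<in># p}"
    then have pp: "is_partition p" "\<forall>x\<in>#p. count p x = 1" "1 \<in># p" by (auto simp: Hset_def)
    have "count (p - {#1#}) 1 = 0" using pp(2,3) by simp
    have "\<forall>x\<in>#p - {#1#}. 1 \<le> x"
    proof
      fix x assume "x \<in># p - {#1#}"
      then have "x \<in># p" by (rule in_diffD)
      then show "1 \<le> x" using pp(1) by (auto simp: is_partition_def)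
    qed
    then have "up 1 (dn 1 (p - {#1#})) = p - {#1#}" by (intro up_dn) auto
    then show "add_mset 1 (up 1 (dn 1 (p - {#1#}))) = p" using pp(3) by simp
  qed
  show "(\<lambda>q. add_mset 1 (up 1 q)) ` Hset (M - 2) \<subseteq> {p \<in> Hset M. 1 \<in># p}"
  proof
    fix p assume "p \<in> (\<lambda>q. add_mset 1 (up 1 q)) ` Hset (M - 2)"
    then obtain q where p: "p = add_mset 1 (up 1 q)" and q: "q \<in> Hset (M-2)" by auto
    from q have qp: "is_partition q" "\<forall>x\<in>#q. count q x = 1" "perimeter q = M - 2" by (auto simp: Hset_def)
    have "perimeter q \<ge> 1" using perim_ge1[OF qp(1)] by simp
    moreover have "perimeter p = perimeter q + 2" using perim_a1u1[OF qp(1)] p by simp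
    ultimately have "perimeter p = M" using qp(3) by linarith
    moreover have n1: "1 \<notin># up 1 q" using up_ge[OF qp(1), of 1] by auto
    moreover have "is_partition p" using part_add[OF part_up[OF qp(1), of 1], of 1] p by simp
    moreover have "\<forall>x\<in>#p. count p x = 1"
    proof
      fix x assume "x \<in># p"
      show "count p x = 1"
      proof (cases "x = 1")
        case True then show ?thesis using n1 p by (simp add: count_eq_zero_iff)
      next
        case False
        then have "x \<in># up 1 q" using \<open>x \<in># p\<close> p by simp
        then show ?thesis using dist_up[OF qp(2), of 1] False p by simp
      qed
    qed
    ultimately show "p \<in> {p \<in> Hset M. 1 \<in># p}" using p by (simp add: Hset_def)
  qed
  show "(\<lambda>p. dn 1 (p - {#1#})) ` {p \<in> Hset M. 1 \<in># p} \<subseteq> Hset (M - 2)"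
  proof
    fix q assume "q \<in> (\<lambda>p. dn 1 (p - {#1#})) ` {p \<in> Hset M. 1 \<in># p}"
    then obtain p where q: "q = dn 1 (p - {#1#})" and p: "p \<in> Hset M" "1 \<in># p" by auto
    from p have pp: "is_partition p" "\<forall>x\<in>#p. count p x = 1" "perimeter p = M" by (auto simp: Hset_def)
    define r where "r = p - {#1#}"
    have pr: "p = add_mset 1 r" using p(2) by (simp add: r_def)
    have rne: "r \<noteq> {#}"
    proof
      assume "r = {#}" then have "p = {#1#}" using pr by simp
      then show False using pp(3) assms by (simp add: perimeter_def)
    qed
    have c1: "count r 1 = 0" using pp(2) p(2) by (simp add: r_def)
    have ge: "\<forall>x\<in>#r. 1 < x"
    proof
      fix x assume "x \<in># r"
      then have "x \<in># p" "x \<noteq> 1" using c1 pr by (auto simp: count_eq_zero_iff)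
      then show "1 < x" using pp(1) by (auto simp: is_partition_def)
    qed
    have rpart: "is_partition r" using pp(1) rne pr by (auto simp: is_partition_def)
    have rd: "\<forall>x\<in>#r. count r x = 1"
    proof
      fix x assume "x \<in># r"
      then have "x \<noteq> 1" using c1 by (auto simp: count_eq_zero_iff)
      moreover have "x \<in># p" using \<open>x \<in># r\<close> pr by simp
      ultimately show "count r x = 1" using pp(2) pr by auto
    qed
    have qr: "q = dn 1 r" by (simp add: q r_def)
    have rq: "r = up 1 q" unfolding qr by (rule up_dn[symmetric]) (use ge in auto)
    have qpart: "is_partition q" using part_dn[OF rpart ge] qr by simp
    have "perimeter q = M - 2" using perim_a1u1[OF qpart] pp(3) pr rq by simp
    moreover have "\<forall>x\<in>#r. 1 \<le> x" using ge by auto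
    then have "\<forall>x\<in>#q. count q x = 1" using dist_dn[OF _ rd, of 1] qr by simp
    ultimately show "q \<in> Hset (M-2)" using qpart by (auto simp: Hset_def)
  qed
qed



lemma Hset0: "Hset 0 = {}" using perim_ge1 by (fastforce simp: Hset_def)
lemma Hset1: "Hset 1 = {{#1#}}"
proof -
  have "Hset 1 \<subseteq> {{#1#}}" using part_one by (auto simp: Hset_def)
  moreover have "{#1#} \<in> Hset 1" by (simp add: Hset_def is_partition_def perimeter_def)
  ultimately show ?thesis by blast
qed

lemma H_rec: assumes "M \<ge> 2"
  shows "card (Hset M) = card (Hset (M-1)) + card (Hset (M-2))"
    and "h M = h (M-1) + card (Hset (M-2)) + h (M-2)"
proof -
  have c1: "card {p\<in>Hset M. 1 \<in># p} = card (Hset (M-2))" using bij_betw_same_card[OF HA[OF assms]] by simp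
  have c2: "card {p\<in>Hset M. 1 \<notin># p} = card (Hset (M-1))" using bij_betw_same_card[OF HB] by simp
  show "card (Hset M) = card (Hset (M-1)) + card (Hset (M-2))"
    using card_split[OF Hset_fin, of M "\<lambda>p. 1 \<in># p"] c1 c2 by simp
  have s1: "sum size {p\<in>Hset M. 1 \<in># p} = sum (\<lambda>q. size (add_mset 1 (up 1 q))) (Hset (M-2))"
    using sum.reindex_bij_betw[OF HA[OF assms], of size] by simp
  have s2: "sum size {p\<in>Hset M. 1 \<notin># p} = sum (\<lambda>q. size (up 1 q)) (Hset (M-1))"
    using sum.reindex_bij_betw[OF HB, of size] by simp
  have "sum (\<lambda>q. size (add_mset 1 (up 1 q))) (Hset (M-2)) = h (M-2) + card (Hset (M-2))"
    by (simp add: h_def sum_Suc)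
  then show "h M = h (M-1) + card (Hset (M-2)) + h (M-2)"
    using sum_split[OF Hset_fin, of size M "\<lambda>p. 1 \<in># p"] s1 s2 by (simp add: h_def)
qed

lemma H_card: "card (Hset M) = fib M"
proof (induction M rule: fib.induct)
  case 1 then show ?case by (simp add: Hset0)
next
  case 2
  have "card (Hset 1) = 1" unfolding Hset1 by simp
  then show ?case by (simp add: One_nat_def)
next
  case (3 n) then show ?case using H_rec(1)[of "Suc (Suc n)"] by simp
qed

definition conv :: "nat \<Rightarrow> nat" where
  "conv n = (\<Sum>k=1..<n. fib k * fib (n - k))"

lemma conv_rec: "conv (Suc (Suc n)) = conv (Suc n) + conv n + fib (Suc n)"
proof -
  have "conv (Suc (Suc n)) = (\<Sum>k=1..<Suc n. fib k * fib (Suc (Suc n) - k)) + fib (Suc n)"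
    by (simp add: conv_def)
  also have "(\<Sum>k=1..<Suc n. fib k * fib (Suc (Suc n) - k))
      = (\<Sum>k=1..<Suc n. fib k * fib (Suc n - k) + fib k * fib (n - k))"
  proof (rule sum.cong)
    fix k assume "k \<in> {1..<Suc n}"
    then have "Suc (Suc n) - k = Suc (Suc (n - k))" "Suc n - k = Suc (n - k)" by auto
    then show "fib k * fib (Suc (Suc n) - k) = fib k * fib (Suc n - k) + fib k * fib (n - k)"
      by (simp add: algebra_simps)
  qed simp
  also have "\<dots> = conv (Suc n) + (\<Sum>k=1..<Suc n. fib k * fib (n - k))"
    by (simp add: sum.distrib conv_def)
  also have "(\<Sum>k=1..<Suc n. fib k * fib (n - k)) = conv n"
  proof (cases n)
    case 0 then show ?thesis by (simp add: conv_def)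
  next
    case (Suc m)
    then have "(\<Sum>k=1..<Suc n. fib k * fib (n - k)) = (\<Sum>k=1..<n. fib k * fib (n - k)) + fib n * fib 0"
      by simp
    then show ?thesis by (simp add: conv_def)
  qed
  finally show ?thesis by simp
qed

lemma g_formula: "g M = fib M + conv M"
proof (induction M rule: fib.induct)
  case 1 then show ?case by (simp add: g_def Gset0 conv_def)
next
  case 2
  have "g 1 = 1" unfolding g_def Gset1 by simp
  then show ?case by (simp add: conv_def)
next
  case (3 n)
  have "g (Suc (Suc n)) = g (Suc n) + fib (Suc n) + g n" using G_rec(2)[of "Suc (Suc n)"] G_card by simp
  then show ?case using 3 conv_rec[of n] by simp
qed

lemma h_formula: "h (Suc M) = fib (Suc M) + conv M"
proof (induction M rule: fib.induct)
  case 1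
  have "h 1 = 1" unfolding h_def Hset1 by simp
  then show ?case by (simp add: conv_def)
next
  case 2
  have "h 2 = h 1 + card (Hset 0) + h 0" using H_rec(2)[of 2] by simp
  moreover have "h 1 = 1" unfolding h_def Hset1 by simp
  moreover have "h 0 = 0" by (simp add: h_def Hset0)
  ultimately have "h 2 = 1" by (simp add: Hset0)
  then show ?case by (simp add: conv_def numeral_2_eq_2)
next
  case (3 n)
  have "h (Suc (Suc (Suc n))) = h (Suc (Suc n)) + fib (Suc n) + h (Suc n)"
    using H_rec(2)[of "Suc (Suc (Suc n))"] H_card by simp
  then show ?case using 3 conv_rec[of n] by simp
qed



definition evs :: "nat multiset \<Rightarrow> nat set" where
  "evs p = {e \<in> set_mset p. even e}"

lemma oe_card: "(\<exists>!e. e \<in># p \<and> even e) \<longleftrightarrow> card (evs p) = 1"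
proof -
  have "(\<exists>!e. e \<in># p \<and> even e) \<longleftrightarrow> (\<exists>x. evs p = {x})"
  proof
    assume "\<exists>!e. e \<in># p \<and> even e"
    then obtain x where x: "x \<in># p \<and> even x" and u: "\<forall>e. e \<in># p \<and> even e \<longrightarrow> e = x"
      unfolding Ex1_def by (elim exE) (erule conjE, rule that, assumption+)
    have "evs p = {x}" using x u unfolding evs_def by blast
    then show "\<exists>x. evs p = {x}" by (rule exI)
  next
    assume "\<exists>x. evs p = {x}"
    then obtain x where x: "evs p = {x}" by (rule exE)
    then have a: "x \<in># p \<and> even x" unfolding evs_def by auto
    have "\<And>e. e \<in># p \<and> even e \<Longrightarrow> e = x"
    proof -
      fix e assume "e \<in># p \<and> even e"
      then have "e \<in> evs p" unfolding evs_def by simp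
      then show "e = x" using x by simp
    qed
    then show "\<exists>!e. e \<in># p \<and> even e" using a by (rule ex1I[rotated])
  qed
  then show ?thesis by (simp add: card_1_singleton_iff)
qed

lemma evs_add_odd: "odd x \<Longrightarrow> evs (add_mset x q) = evs q"
  by (auto simp: evs_def)

lemma evs_up2: "evs (up 2 q) = (\<lambda>x. x + 2) ` evs q"
  by (auto simp: evs_def up_def)

lemma card_evs_up2: "card (evs (up 2 q)) = card (evs q)"
  unfolding evs_up2 by (rule card_image) (simp add: inj_on_def)

lemma G1_even: "p \<in> G1set M \<Longrightarrow> \<exists>e. e \<in># p \<and> even e"
  by (auto simp: G1set_def)

lemma G1set0: "G1set 0 = {}" using perim_ge1 by (fastforce simp: G1set_def)
lemma G1set1: "G1set 1 = {}" using part_one by (fastforce simp: G1set_def)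

lemma G1A: "bij_betw (add_mset 1) (G1set (M-1)) {p\<in>G1set M. 1 \<in># p}"
proof (rule bij_betw_byWitness[where f'="\<lambda>p. p - {#1#}"])
  show "\<forall>a\<in>G1set (M - 1). add_mset 1 a - {#1#} = a" by simp
  show "\<forall>a'\<in>{p \<in> G1set M. 1 \<in># p}. add_mset 1 (a' - {#1#}) = a'" by simp
  show "add_mset 1 ` G1set (M - 1) \<subseteq> {p \<in> G1set M. 1 \<in># p}"
  proof
    fix p assume "p \<in> add_mset 1 ` G1set (M - 1)"
    then obtain q where p: "p = add_mset 1 q" and q: "q \<in> G1set (M-1)" by auto
    from q have qp: "is_partition q" "perimeter q = M - 1" "card (evs q) = 1"
      by (auto simp: G1set_def oe_card)
    have "perimeter q \<ge> 1" using perim_ge1[OF qp(1)] by simp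
    moreover have "perimeter p = perimeter q + 1" using perim_add1[OF qp(1)] p by simp
    ultimately have "perimeter p = M" using qp(2) by linarith
    moreover have "card (evs p) = 1" using evs_add_odd[of 1 q] qp(3) p by simp
    moreover have "is_partition p" using part_add[OF qp(1), of 1] p by simp
    ultimately show "p \<in> {p \<in> G1set M. 1 \<in># p}" using p by (simp add: G1set_def oe_card)
  qed
  show "(\<lambda>p. p - {#1#}) ` {p \<in> G1set M. 1 \<in># p} \<subseteq> G1set (M - 1)"
  proof
    fix q assume "q \<in> (\<lambda>p. p - {#1#}) ` {p \<in> G1set M. 1 \<in># p}"
    then obtain p where q: "q = p - {#1#}" and p: "p \<in> G1set M" "1 \<in># p" by auto
    have pq: "p = add_mset 1 q" using p q by simp
    from p have pp: "is_partition p" "perimeter p = M" "card (evs p) = 1"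
      by (auto simp: G1set_def oe_card)
    obtain e where e: "e \<in># p" "even e" using G1_even[OF p(1)] by blast
    then have "e \<in># q" using pq by auto
    then have qne: "q \<noteq> {#}" by auto
    have qpart: "is_partition q" using pp qne pq by (auto simp: is_partition_def)
    have "perimeter q = M - 1" using perim_add1[OF qpart] pp(2) pq by simp
    moreover have "card (evs q) = 1" using evs_add_odd[of 1 q] pp(3) pq by simp
    ultimately show "q \<in> G1set (M-1)" using qpart by (simp add: G1set_def oe_card)
  qed
qed

lemma G1B: "bij_betw (up 2) (G1set (M-2)) {p\<in>G1set M. 1 \<notin># p \<and> 2 \<notin># p}"
proof (rule bij_betw_byWitness[where f'="dn 2"])
  show "\<forall>a\<in>G1set (M - 2). dn 2 (up 2 a) = a" by simp
  have ge: "\<forall>x\<in>#p. 2 < x" if "p \<in> {p\<in>G1set M. 1 \<notin># p \<and> 2 \<notin># p}" for p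
  proof
    fix x assume "x \<in># p"
    then have "0 < x" "x \<noteq> 1" "x \<noteq> 2" using that by (auto simp: G1set_def is_partition_def)
    then show "2 < x" by linarith
  qed
  show "\<forall>a'\<in>{p\<in>G1set M. 1 \<notin># p \<and> 2 \<notin># p}. up 2 (dn 2 a') = a'"
  proof
    fix p assume "p \<in> {p\<in>G1set M. 1 \<notin># p \<and> 2 \<notin># p}"
    then have "\<forall>x\<in>#p. 2 \<le> x" using ge by fastforce
    then show "up 2 (dn 2 p) = p" by (intro up_dn) auto
  qed
  show "up 2 ` G1set (M - 2) \<subseteq> {p\<in>G1set M. 1 \<notin># p \<and> 2 \<notin># p}"
  proof
    fix p assume "p \<in> up 2 ` G1set (M - 2)"
    then obtain q where p: "p = up 2 q" and q: "q \<in> G1set (M-2)" by auto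
    from q have qp: "is_partition q" "perimeter q = M - 2" "card (evs q) = 1"
      by (auto simp: G1set_def oe_card)
    have "perimeter q \<ge> 1" using perim_ge1[OF qp(1)] by simp
    moreover have "perimeter p = perimeter q + 2" using perim_up[OF qp(1), of 2] p by simp
    ultimately have "perimeter p = M" using qp(2) by linarith
    moreover have "1 \<notin># p" "2 \<notin># p" using up_ge[OF qp(1), of 2] p by auto
    moreover have "is_partition p" using part_up[OF qp(1), of 2] p by simp
    moreover have "card (evs p) = 1" using card_evs_up2[of q] qp(3) p by simp
    ultimately show "p \<in> {p\<in>G1set M. 1 \<notin># p \<and> 2 \<notin># p}" by (simp add: G1set_def oe_card)
  qed
  show "dn 2 ` {p\<in>G1set M. 1 \<notin># p \<and> 2 \<notin># p} \<subseteq> G1set (M - 2)"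
  proof
    fix q assume "q \<in> dn 2 ` {p\<in>G1set M. 1 \<notin># p \<and> 2 \<notin># p}"
    then obtain p where q: "q = dn 2 p" and p: "p \<in> {p\<in>G1set M. 1 \<notin># p \<and> 2 \<notin># p}" by auto
    from p have pp: "is_partition p" "perimeter p = M" "card (evs p) = 1"
      by (auto simp: G1set_def oe_card)
    have g2: "\<forall>x\<in>#p. 2 < x" using ge[OF p] .
    then have "\<forall>x\<in>#p. 2 \<le> x" by fastforce
    then have pq: "p = up 2 q" unfolding q by (intro up_dn[symmetric]) auto
    have qpart: "is_partition q" using part_dn[OF pp(1) g2] q by simp
    have "perimeter q = M - 2" using perim_up[OF qpart, of 2] pp(2) pq by simp
    moreover have "card (evs q) = 1" using card_evs_up2[of q] pp(3) pq by simp
    ultimately show "q \<in> G1set (M-2)" using qpart by (simp add: G1set_def oe_card)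
  qed
qed

definition SS :: "nat \<Rightarrow> nat multiset set" where
  "SS M = {p. is_partition p \<and> perimeter p = M \<and> 2 \<in># p \<and> (\<forall>x\<in>#p. x \<noteq> 2 \<longrightarrow> odd x \<and> 3 \<le> x)}"

lemma SS_fin: "finite (SS M)"
  by (rule finite_subset[OF _ finite_PS[of M]]) (auto simp: SS_def PS_def)

lemma G1C: "{p\<in>G1set M. 1 \<in># p \<or> 2 \<in># p} - {p\<in>G1set M. 1 \<in># p} = SS M"
proof (intro equalityI subsetI)
  fix p assume "p \<in> {p\<in>G1set M. 1 \<in># p \<or> 2 \<in># p} - {p\<in>G1set M. 1 \<in># p}"
  then have p: "p \<in> G1set M" "2 \<in># p" "1 \<notin># p" by auto
  then have pp: "is_partition p" "perimeter p = M" "\<exists>!e. e \<in># p \<and> even e" by (auto simp: G1set_def)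
  have "\<forall>x\<in>#p. x \<noteq> 2 \<longrightarrow> odd x \<and> 3 \<le> x"
  proof (intro ballI impI)
    fix x assume x: "x \<in># p" "x \<noteq> 2"
    obtain y where "\<forall>e. e \<in># p \<and> even e \<longrightarrow> e = y"
      using pp(3) unfolding Ex1_def by (elim exE) (erule conjE, rule that, assumption+)
    moreover have "2 \<in># p \<and> even (2::nat)" using p(2) by simp
    ultimately have "2 = y" by blast
    have "odd x"
    proof (rule ccontr)
      assume "\<not> odd x"
      then have "x = y" using \<open>\<forall>e. e \<in># p \<and> even e \<longrightarrow> e = y\<close> x(1) by blast
      then show False using \<open>2 = y\<close> x(2) by simp
    qed
    moreover have "x \<noteq> 1" using p(3) x by auto
    ultimately show "odd x \<and> 3 \<le> x" using odd3[of x] by simp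
  qed
  then show "p \<in> SS M" using pp p by (simp add: SS_def)
next
  fix p assume "p \<in> SS M"
  then have pp: "is_partition p" "perimeter p = M" "2 \<in># p" "\<forall>x\<in>#p. x \<noteq> 2 \<longrightarrow> odd x \<and> 3 \<le> x"
    by (auto simp: SS_def)
  have "\<exists>!e. e \<in># p \<and> even e"
  proof
    show "2 \<in># p \<and> even (2::nat)" using pp by simp
    show "\<And>e. e \<in># p \<and> even e \<Longrightarrow> e = 2" using pp(4) by auto
  qed
  moreover have "1 \<notin># p" using pp(4) by fastforce
  ultimately show "p \<in> {p\<in>G1set M. 1 \<in># p \<or> 2 \<in># p} - {p\<in>G1set M. 1 \<in># p}"
    using pp by (simp add: G1set_def)
qed

lemma G1_rec: "card (G1set M) = card (G1set (M-1)) + card (G1set (M-2)) + card (SS M)"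
proof -
  have "card (G1set M) = card {p\<in>G1set M. 1 \<in># p \<or> 2 \<in># p} + card {p\<in>G1set M. \<not> (1 \<in># p \<or> 2 \<in># p)}"
    by (rule card_split[OF G1set_fin])
  moreover have "card {p\<in>G1set M. \<not> (1 \<in># p \<or> 2 \<in># p)} = card (G1set (M-2))"
    using bij_betw_same_card[OF G1B] by simp
  moreover have "card {p\<in>G1set M. 1 \<in># p \<or> 2 \<in># p} = card {p\<in>G1set M. 1 \<in># p} + card (SS M)"
  proof -
    have f: "finite {p\<in>G1set M. 1 \<in># p \<or> 2 \<in># p}" using G1set_fin by simp
    have "card ({p\<in>G1set M. 1 \<in># p \<or> 2 \<in># p} - {p\<in>G1set M. 1 \<in># p}) =
        card {p\<in>G1set M. 1 \<in># p \<or> 2 \<in># p} - card {p\<in>G1set M. 1 \<in># p}"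
      by (rule card_Diff_subset) (use G1set_fin in auto)
    moreover have "card {p\<in>G1set M. 1 \<in># p} \<le> card {p\<in>G1set M. 1 \<in># p \<or> 2 \<in># p}"
      by (rule card_mono[OF f]) auto
    ultimately show ?thesis using G1C by simp
  qed
  moreover have "card {p\<in>G1set M. 1 \<in># p} = card (G1set (M-1))"
    using bij_betw_same_card[OF G1A] by simp
  ultimately show ?thesis by simp
qed



lemma odd_m2: "odd (x::nat) \<Longrightarrow> 2 < x \<Longrightarrow> odd (x - 2)" by presburger

lemma SS_Max2: "2 \<in># q \<Longrightarrow> 2 \<le> Max_mset q" by simp

lemma SA: "bij_betw (add_mset 2) (SS (M-1)) {p\<in>SS M. 2 \<in># p - {#2#}}"
proof (rule bij_betw_byWitness[where f'="\<lambda>p. p - {#2#}"])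
  show "\<forall>a\<in>SS (M - 1). add_mset 2 a - {#2#} = a" by simp
  show "\<forall>a'\<in>{p\<in>SS M. 2 \<in># p - {#2#}}. add_mset 2 (a' - {#2#}) = a'"
    by (auto simp: SS_def)
  show "add_mset 2 ` SS (M - 1) \<subseteq> {p\<in>SS M. 2 \<in># p - {#2#}}"
  proof
    fix p assume "p \<in> add_mset 2 ` SS (M - 1)"
    then obtain q where p: "p = add_mset 2 q" and q: "q \<in> SS (M-1)" by auto
    from q have qp: "is_partition q" "perimeter q = M - 1" "2 \<in># q"
      "\<forall>x\<in>#q. x \<noteq> 2 \<longrightarrow> odd x \<and> 3 \<le> x" by (auto simp: SS_def)
    have "perimeter q \<ge> 1" using perim_ge1[OF qp(1)] by simp
    moreover have "perimeter p = perimeter q + 1" using perim_addx[OF qp(1) SS_Max2[OF qp(3)]] p by simp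
    ultimately have "perimeter p = M" using qp(2) by linarith
    moreover have "is_partition p" using part_add[OF qp(1), of 2] p by simp
    moreover have "\<forall>x\<in>#p. x \<noteq> 2 \<longrightarrow> odd x \<and> 3 \<le> x" using qp(4) p by simp
    ultimately show "p \<in> {p\<in>SS M. 2 \<in># p - {#2#}}" using p qp(3) by (simp add: SS_def)
  qed
  show "(\<lambda>p. p - {#2#}) ` {p\<in>SS M. 2 \<in># p - {#2#}} \<subseteq> SS (M - 1)"
  proof
    fix q assume "q \<in> (\<lambda>p. p - {#2#}) ` {p\<in>SS M. 2 \<in># p - {#2#}}"
    then obtain p where q: "q = p - {#2#}" and p: "p \<in> SS M" "2 \<in># p - {#2#}" by auto
    from p have pp: "is_partition p" "perimeter p = M" "2 \<in># p"
      "\<forall>x\<in>#p. x \<noteq> 2 \<longrightarrow> odd x \<and> 3 \<le> x" by (auto simp: SS_def)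
    have pq: "p = add_mset 2 q" using pp(3) q by simp
    have q2: "2 \<in># q" using p(2) q by simp
    then have qne: "q \<noteq> {#}" by auto
    have qpart: "is_partition q" using pp qne pq by (auto simp: is_partition_def)
    have "perimeter q = M - 1" using perim_addx[OF qpart SS_Max2[OF q2]] pp(2) pq by simp
    moreover have "\<forall>x\<in>#q. x \<noteq> 2 \<longrightarrow> odd x \<and> 3 \<le> x" using pp(4) pq by simp
    ultimately show "q \<in> SS (M-1)" using qpart q2 by (simp add: SS_def)
  qed
qed

lemma SB: assumes "M \<noteq> 2"
  shows "bij_betw (\<lambda>q. add_mset 2 (up 2 q)) (Gset (M-3)) {p\<in>SS M. 2 \<notin># p - {#2#}}"
proof (rule bij_betw_byWitness[where f'="\<lambda>p. dn 2 (p - {#2#})"])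
  show "\<forall>a\<in>Gset (M - 3). dn 2 (add_mset 2 (up 2 a) - {#2#}) = a" by simp
  have ge: "\<forall>x\<in># p - {#2#}. 2 < x \<and> odd x" if "p \<in> {p\<in>SS M. 2 \<notin># p - {#2#}}" for p
  proof
    fix x assume x: "x \<in># p - {#2#}"
    have "x \<in># p" using in_diffD[OF x] .
    moreover have "x \<noteq> 2" using x that by auto
    ultimately show "2 < x \<and> odd x" using that by (auto simp: SS_def)
  qed
  show "\<forall>p\<in>{p\<in>SS M. 2 \<notin># p - {#2#}}. add_mset 2 (up 2 (dn 2 (p - {#2#}))) = p"
  proof
    fix p assume p: "p \<in> {p\<in>SS M. 2 \<notin># p - {#2#}}"
    then have "\<forall>x\<in># p - {#2#}. 2 \<le> x" using ge by fastforce
    then have "up 2 (dn 2 (p - {#2#})) = p - {#2#}" by (intro up_dn) auto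
    moreover have "2 \<in># p" using p by (simp add: SS_def)
    ultimately show "add_mset 2 (up 2 (dn 2 (p - {#2#}))) = p" by simp
  qed
  show "(\<lambda>q. add_mset 2 (up 2 q)) ` Gset (M - 3) \<subseteq> {p\<in>SS M. 2 \<notin># p - {#2#}}"
  proof
    fix p assume "p \<in> (\<lambda>q. add_mset 2 (up 2 q)) ` Gset (M - 3)"
    then obtain q where p: "p = add_mset 2 (up 2 q)" and q: "q \<in> Gset (M-3)" by auto
    from q have qp: "is_partition q" "\<forall>x\<in>#q. odd x" "perimeter q = M - 3" by (auto simp: Gset_def)
    have "perimeter q \<ge> 1" using perim_ge1[OF qp(1)] by simp
    moreover have "perimeter p = perimeter q + 3" using perim_a2u2[OF qp(1)] p by simp
    ultimately have "perimeter p = M" using qp(3) by linarith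
    moreover have "is_partition p" using part_add[OF part_up[OF qp(1), of 2], of 2] p by simp
    moreover have "\<forall>x\<in>#up 2 q. odd x \<and> 3 \<le> x" using qp(1,2) by (auto simp: up_def is_partition_def)
    moreover have "2 \<notin># up 2 q" using up_ge[OF qp(1), of 2] by auto
    ultimately show "p \<in> {p\<in>SS M. 2 \<notin># p - {#2#}}" using p by (auto simp: SS_def)
  qed
  show "(\<lambda>p. dn 2 (p - {#2#})) ` {p\<in>SS M. 2 \<notin># p - {#2#}} \<subseteq> Gset (M - 3)"
  proof
    fix q assume "q \<in> (\<lambda>p. dn 2 (p - {#2#})) ` {p\<in>SS M. 2 \<notin># p - {#2#}}"
    then obtain p where q: "q = dn 2 (p - {#2#})" and p: "p \<in> {p\<in>SS M. 2 \<notin># p - {#2#}}" by auto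
    from p have pp: "is_partition p" "perimeter p = M" "2 \<in># p" by (auto simp: SS_def)
    define r where "r = p - {#2#}"
    have pr: "p = add_mset 2 r" using pp(3) by (simp add: r_def)
    have rne: "r \<noteq> {#}"
    proof
      assume "r = {#}" then have "p = {#2#}" using pr by simp
      then show False using pp(2) assms by (simp add: perimeter_def)
    qed
    have ge2: "\<forall>x\<in>#r. 2 < x \<and> odd x" using ge[OF p] by (simp add: r_def)
    then have g2: "\<forall>x\<in>#r. 2 < x" by blast
    have rpart: "is_partition r" unfolding is_partition_def using rne g2 by auto
    have qr: "q = dn 2 r" by (simp add: q r_def)
    have "\<forall>x\<in>#r. 2 \<le> x" using g2 by fastforce
    then have rq: "r = up 2 q" unfolding qr by (intro up_dn[symmetric]) auto
    have qpart: "is_partition q" using part_dn[OF rpart g2] qr by simp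
    have "perimeter q = M - 3" using perim_a2u2[OF qpart] pp(2) pr rq by simp
    moreover have "\<forall>y\<in>#q. odd y"
    proof
      fix y assume "y \<in># q"
      then obtain x where x: "x \<in># r" "y = x - 2" unfolding qr dn_def by auto
      then have "odd x" "2 < x" using ge2 by auto
      then show "odd y" using x(2) odd_m2 by blast
    qed
    ultimately show "q \<in> Gset (M-3)" using qpart by (simp add: Gset_def)
  qed
qed

lemma SS2: "{p\<in>SS 2. 2 \<notin># p - {#2#}} = {{#2#}}"
proof (intro equalityI subsetI)
  fix p assume p: "p \<in> {p\<in>SS 2. 2 \<notin># p - {#2#}}"
  then have pp: "is_partition p" "perimeter p = 2" "2 \<in># p" "\<forall>x\<in>#p. x \<noteq> 2 \<longrightarrow> odd x \<and> 3 \<le> x"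
    by (auto simp: SS_def)
  define r where "r = p - {#2#}"
  have pr: "p = add_mset 2 r" using pp(3) by (simp add: r_def)
  have "r = {#}"
  proof (rule ccontr)
    assume rne: "r \<noteq> {#}"
    then obtain x where x: "x \<in># r" by blast
    have "x \<noteq> 2" using x p by (auto simp: r_def)
    then have "3 \<le> x" using pp(4) pr x by auto
    moreover have "x \<le> Max_mset r" using x by simp
    moreover have "perimeter p = max 2 (Max_mset r) + size r" using perim_add[OF rne] pr by simp
    moreover have "size r \<ge> 1" using size_pos[OF rne] .
    ultimately show False using pp(2) by linarith
  qed
  then show "p \<in> {{#2#}}" using pr by simp
next
  fix p :: "nat multiset" assume "p \<in> {{#2#}}"
  then show "p \<in> {p\<in>SS 2. 2 \<notin># p - {#2#}}" by (simp add: SS_def is_partition_def perimeter_def)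
qed

lemma SS0: "SS 0 = {}" using perim_ge1 by (fastforce simp: SS_def)
lemma SS1: "SS 1 = {}" using part_one by (fastforce simp: SS_def)

lemma SS_rec: "card (SS M) = card (SS (M-1)) + card {p\<in>SS M. 2 \<notin># p - {#2#}}"
  using card_split[OF SS_fin, of M "\<lambda>p. 2 \<in># p - {#2#}"] bij_betw_same_card[OF SA[of M]] by simp

lemma SS_card: "card (SS (Suc n)) = fib n"
proof (induction n rule: fib.induct)
  case 1 then show ?case by (simp add: SS1[unfolded One_nat_def])
next
  case 2
  have "card (SS 2) = card (SS 1) + card {p\<in>SS 2. 2 \<notin># p - {#2#}}" using SS_rec[of 2] by simp
  then have "card (SS 2) = 1" by (simp add: SS1[unfolded One_nat_def] SS2)
  then show ?case by (simp add: numeral_2_eq_2)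
next
  case (3 m)
  have "card (SS (Suc (Suc (Suc m)))) = card (SS (Suc (Suc m))) + card (Gset m)"
    using SS_rec[of "Suc (Suc (Suc m))"] bij_betw_same_card[OF SB[of "Suc (Suc (Suc m))"]] by simp
  then show ?case using 3 G_card by simp
qed

lemma g1_formula: "g1 M = conv M"
proof (induction M rule: fib.induct)
  case 1 then show ?case by (simp add: g1_def G1set0 conv_def)
next
  case 2 then show ?case by (simp add: g1_def G1set1[unfolded One_nat_def] conv_def)
next
  case (3 n)
  have "g1 (Suc (Suc n)) = g1 (Suc n) + g1 n + fib (Suc n)"
    using G1_rec[of "Suc (Suc n)"] SS_card[of "Suc n"] by (simp add: g1_def)
  then show ?case using 3 conv_rec[of n] by simp
qed



definition reps :: "nat multiset \<Rightarrow> nat set" where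
  "reps p = {v \<in> set_mset p. 2 \<le> count p v}"

lemma rep_card: "(\<exists>!v. v \<in># p \<and> 2 \<le> count p v) \<longleftrightarrow> card (reps p) = 1"
proof -
  have "(\<exists>!v. v \<in># p \<and> 2 \<le> count p v) \<longleftrightarrow> (\<exists>x. reps p = {x})"
  proof
    assume "\<exists>!v. v \<in># p \<and> 2 \<le> count p v"
    then obtain x where x: "x \<in># p \<and> 2 \<le> count p x" and u: "\<forall>e. e \<in># p \<and> 2 \<le> count p e \<longrightarrow> e = x"
      unfolding Ex1_def by (elim exE) (erule conjE, rule that, assumption+)
    have "reps p = {x}" using x u unfolding reps_def by blast
    then show "\<exists>x. reps p = {x}" by (rule exI)
  next
    assume "\<exists>x. reps p = {x}"
    then obtain x where x: "reps p = {x}" by (rule exE)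
    then have a: "x \<in># p \<and> 2 \<le> count p x" unfolding reps_def by auto
    have "\<And>e. e \<in># p \<and> 2 \<le> count p e \<Longrightarrow> e = x"
    proof -
      fix e assume "e \<in># p \<and> 2 \<le> count p e"
      then have "e \<in> reps p" unfolding reps_def by simp
      then show "e = x" using x by simp
    qed
    then show "\<exists>!v. v \<in># p \<and> 2 \<le> count p v" using a by (rule ex1I[rotated])
  qed
  then show ?thesis by (simp add: card_1_singleton_iff)
qed

lemma reps_up: "reps (up k q) = (\<lambda>x. x + k) ` reps q"
proof (intro equalityI subsetI)
  fix v assume "v \<in> reps (up k q)"
  then have v: "v \<in># up k q" "2 \<le> count (up k q) v" by (auto simp: reps_def)
  then obtain y where y: "y \<in># q" "v = y + k" using mem_up by blast
  then have "2 \<le> count q y" using v(2) count_up[of k q y] by simp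
  then show "v \<in> (\<lambda>x. x + k) ` reps q" using y by (auto simp: reps_def)
next
  fix v assume "v \<in> (\<lambda>x. x + k) ` reps q"
  then obtain y where y: "y \<in># q" "2 \<le> count q y" "v = y + k" by (auto simp: reps_def)
  then show "v \<in> reps (up k q)" using count_up[of k q y] mem_up2[OF y(1), of k] by (simp add: reps_def)
qed

lemma card_reps_up: "card (reps (up k q)) = card (reps q)"
  unfolding reps_up by (rule card_image) (simp add: inj_on_def)

lemma reps_add1: "1 \<notin># r \<Longrightarrow> reps (add_mset 1 r) = reps r"
proof (intro equalityI subsetI)
  fix v assume r: "1 \<notin># r" and v: "v \<in> reps (add_mset 1 r)"
  then have "v \<noteq> 1" by (auto simp: reps_def count_eq_zero_iff)
  then show "v \<in> reps r" using v by (auto simp: reps_def)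
next
  fix v assume r: "1 \<notin># r" and v: "v \<in> reps r"
  then have "v \<noteq> 1" by (auto simp: reps_def)
  then show "v \<in> reps (add_mset 1 r)" using v by (auto simp: reps_def)
qed

lemma H1set0: "H1set 0 = {}" using perim_ge1 by (fastforce simp: H1set_def)
lemma H1set1: "H1set 1 = {}"
proof -
  have "p \<notin> H1set 1" for p
  proof
    assume "p \<in> H1set 1"
    then have "is_partition p" "perimeter p = 1" "card (reps p) = 1" by (auto simp: H1set_def rep_card)
    then have "p = {#1#}" "card (reps p) = 1" using part_one by auto
    moreover have "reps {#1#} = {}" by (simp add: reps_def)
    ultimately show False by simp
  qed
  then show ?thesis by blast
qed

lemma H1B: "bij_betw (up 1) (H1set (M-1)) {p\<in>H1set M. 1 \<notin># p}"
proof (rule bij_betw_byWitness[where f'="dn 1"])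
  show "\<forall>a\<in>H1set (M - 1). dn 1 (up 1 a) = a" by simp
  show "\<forall>a'\<in>{p \<in> H1set M. 1 \<notin># p}. up 1 (dn 1 a') = a'"
  proof
    fix p assume "p \<in> {p \<in> H1set M. 1 \<notin># p}"
    then have "is_partition p" by (auto simp: H1set_def)
    then have "\<forall>x\<in>#p. 1 \<le> x" by (auto simp: is_partition_def)
    then show "up 1 (dn 1 p) = p" by (intro up_dn) auto
  qed
  show "up 1 ` H1set (M - 1) \<subseteq> {p \<in> H1set M. 1 \<notin># p}"
  proof
    fix p assume "p \<in> up 1 ` H1set (M - 1)"
    then obtain q where p: "p = up 1 q" and q: "q \<in> H1set (M-1)" by auto
    from q have qp: "is_partition q" "perimeter q = M - 1" "card (reps q) = 1"
      by (auto simp: H1set_def rep_card)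
    have "perimeter q \<ge> 1" using perim_ge1[OF qp(1)] by simp
    moreover have "perimeter p = perimeter q + 1" using perim_up[OF qp(1), of 1] p by simp
    ultimately have "perimeter p = M" using qp(2) by linarith
    moreover have "1 \<notin># p" using up_ge[OF qp(1), of 1] p by auto
    moreover have "is_partition p" using part_up[OF qp(1), of 1] p by simp
    moreover have "card (reps p) = 1" using card_reps_up[of 1 q] qp(3) p by simp
    ultimately show "p \<in> {p \<in> H1set M. 1 \<notin># p}" by (simp add: H1set_def rep_card)
  qed
  show "dn 1 ` {p \<in> H1set M. 1 \<notin># p} \<subseteq> H1set (M - 1)"
  proof
    fix q assume "q \<in> dn 1 ` {p \<in> H1set M. 1 \<notin># p}"
    then obtain p where q: "q = dn 1 p" and p: "p \<in> H1set M" "1 \<notin># p" by auto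
    from p have pp: "is_partition p" "perimeter p = M" "card (reps p) = 1"
      by (auto simp: H1set_def rep_card)
    have ge: "\<forall>x\<in>#p. 1 < x"
    proof
      fix x assume "x \<in># p"
      then have "0 < x" "x \<noteq> 1" using pp(1) p(2) by (auto simp: is_partition_def)
      then show "1 < x" by linarith
    qed
    then have "\<forall>x\<in>#p. 1 \<le> x" by auto
    then have pq: "p = up 1 q" unfolding q by (intro up_dn[symmetric]) auto
    have qpart: "is_partition q" using part_dn[OF pp(1) ge] q by simp
    have "perimeter q = M - 1" using perim_up[OF qpart, of 1] pp(2) pq by simp
    moreover have "card (reps q) = 1" using card_reps_up[of 1 q] pp(3) pq by simp
    ultimately show "q \<in> H1set (M-1)" using qpart by (simp add: H1set_def rep_card)
  qed
qed

lemma H1A: assumes "M \<ge> 2"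
  shows "bij_betw (\<lambda>q. add_mset 1 (up 1 q)) (H1set (M-2)) {p\<in>H1set M. count p 1 = 1}"
proof (rule bij_betw_byWitness[where f'="\<lambda>p. dn 1 (p - {#1#})"])
  show "\<forall>a\<in>H1set (M - 2). dn 1 (add_mset 1 (up 1 a) - {#1#}) = a" by simp
  show "\<forall>p\<in>{p \<in> H1set M. count p 1 = 1}. add_mset 1 (up 1 (dn 1 (p - {#1#}))) = p"
  proof
    fix p assume "p \<in> {p \<in> H1set M. count p 1 = 1}"
    then have pp: "is_partition p" "count p 1 = 1" by (auto simp: H1set_def)
    have "\<forall>x\<in>#p - {#1#}. 1 \<le> x"
    proof
      fix x assume "x \<in># p - {#1#}"
      then have "x \<in># p" by (rule in_diffD)
      then show "1 \<le> x" using pp(1) by (auto simp: is_partition_def)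
    qed
    then have "up 1 (dn 1 (p - {#1#})) = p - {#1#}" by (intro up_dn) auto
    moreover have "1 \<in># p" using pp(2) by (simp add: count_inI)
    ultimately show "add_mset 1 (up 1 (dn 1 (p - {#1#}))) = p" by simp
  qed
  show "(\<lambda>q. add_mset 1 (up 1 q)) ` H1set (M - 2) \<subseteq> {p \<in> H1set M. count p 1 = 1}"
  proof
    fix p assume "p \<in> (\<lambda>q. add_mset 1 (up 1 q)) ` H1set (M - 2)"
    then obtain q where p: "p = add_mset 1 (up 1 q)" and q: "q \<in> H1set (M-2)" by auto
    from q have qp: "is_partition q" "perimeter q = M - 2" "card (reps q) = 1"
      by (auto simp: H1set_def rep_card)
    have "perimeter q \<ge> 1" using perim_ge1[OF qp(1)] by simp
    moreover have "perimeter p = perimeter q + 2" using perim_a1u1[OF qp(1)] p by simp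
    ultimately have "perimeter p = M" using qp(2) by linarith
    moreover have n1: "1 \<notin># up 1 q" using up_ge[OF qp(1), of 1] by auto
    moreover have "is_partition p" using part_add[OF part_up[OF qp(1), of 1], of 1] p by simp
    moreover have "card (reps p) = 1" using reps_add1[OF n1] card_reps_up[of 1 q] qp(3) p by simp
    moreover have "count p 1 = 1" using n1 p by (simp add: count_eq_zero_iff)
    ultimately show "p \<in> {p \<in> H1set M. count p 1 = 1}" by (simp add: H1set_def rep_card)
  qed
  show "(\<lambda>p. dn 1 (p - {#1#})) ` {p \<in> H1set M. count p 1 = 1} \<subseteq> H1set (M - 2)"
  proof
    fix q assume "q \<in> (\<lambda>p. dn 1 (p - {#1#})) ` {p \<in> H1set M. count p 1 = 1}"
    then obtain p where q: "q = dn 1 (p - {#1#})" and p: "p \<in> H1set M" "count p 1 = 1" by auto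
    from p have pp: "is_partition p" "perimeter p = M" "card (reps p) = 1"
      by (auto simp: H1set_def rep_card)
    define r where "r = p - {#1#}"
    have p1: "1 \<in># p" using p(2) by (simp add: count_inI)
    have pr: "p = add_mset 1 r" using p1 by (simp add: r_def)
    have rne: "r \<noteq> {#}"
    proof
      assume "r = {#}" then have "p = {#1#}" using pr by simp
      then show False using pp(2) assms by (simp add: perimeter_def)
    qed
    have c1: "count r 1 = 0" using p(2) by (simp add: r_def)
    then have n1: "1 \<notin># r" by (simp add: count_eq_zero_iff)
    have ge: "\<forall>x\<in>#r. 1 < x"
    proof
      fix x assume "x \<in># r"
      then have "x \<in># p" "x \<noteq> 1" using n1 pr by auto
      then show "1 < x" using pp(1) by (auto simp: is_partition_def)
    qed
    have rpart: "is_partition r" using pp(1) rne pr by (auto simp: is_partition_def)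
    have qr: "q = dn 1 r" by (simp add: q r_def)
    have "\<forall>x\<in>#r. 1 \<le> x" using ge by auto
    then have rq: "r = up 1 q" unfolding qr by (intro up_dn[symmetric]) auto
    have qpart: "is_partition q" using part_dn[OF rpart ge] qr by simp
    have "perimeter q = M - 2" using perim_a1u1[OF qpart] pp(2) pr rq by simp
    moreover have "card (reps q) = 1" using reps_add1[OF n1] card_reps_up[of 1 q] pp(3) pr rq by simp
    ultimately show "q \<in> H1set (M-2)" using qpart by (simp add: H1set_def rep_card)
  qed
qed



definition DD :: "nat \<Rightarrow> nat multiset set" where
  "DD M = {p. is_partition p \<and> perimeter p = M \<and> 2 \<le> count p 1 \<and> (\<forall>x\<in>#p. x \<noteq> 1 \<longrightarrow> count p x = 1)}"

lemma DD_fin: "finite (DD M)"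
  by (rule finite_subset[OF _ finite_PS[of M]]) (auto simp: DD_def PS_def)

lemma H1C: "{p\<in>H1set M. count p 1 \<noteq> 1 \<and> 1 \<in># p} = DD M"
proof (intro equalityI subsetI)
  fix p assume "p \<in> {p\<in>H1set M. count p 1 \<noteq> 1 \<and> 1 \<in># p}"
  then have pp: "is_partition p" "perimeter p = M" "\<exists>!v. v \<in># p \<and> 2 \<le> count p v"
    "count p 1 \<noteq> 1" "1 \<in># p" by (auto simp: H1set_def)
  have "0 < count p 1" using pp(5) by simp
  then have c1: "2 \<le> count p 1" using pp(4) by linarith
  obtain y where u: "\<forall>e. e \<in># p \<and> 2 \<le> count p e \<longrightarrow> e = y"
    using pp(3) unfolding Ex1_def by (elim exE) (erule conjE, rule that, assumption+)
  have "1 = y" using u pp(5) c1 by blast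
  have "\<forall>x\<in>#p. x \<noteq> 1 \<longrightarrow> count p x = 1"
  proof (intro ballI impI)
    fix x assume x: "x \<in># p" "x \<noteq> 1"
    have "\<not> 2 \<le> count p x"
    proof
      assume "2 \<le> count p x"
      then have "x = y" using u x(1) by blast
      then show False using \<open>1 = y\<close> x(2) by simp
    qed
    moreover have "0 < count p x" using x(1) by simp
    ultimately show "count p x = 1" by linarith
  qed
  then show "p \<in> DD M" using pp c1 by (simp add: DD_def)
next
  fix p assume "p \<in> DD M"
  then have pp: "is_partition p" "perimeter p = M" "2 \<le> count p 1" "\<forall>x\<in>#p. x \<noteq> 1 \<longrightarrow> count p x = 1"
    by (auto simp: DD_def)
  have p1: "1 \<in># p" using pp(3) by (simp add: count_inI)
  have "\<exists>!v. v \<in># p \<and> 2 \<le> count p v"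
  proof (rule ex1I)
    show "1 \<in># p \<and> 2 \<le> count p 1" using p1 pp(3) by simp
    fix v assume v: "v \<in># p \<and> 2 \<le> count p v"
    show "v = 1"
    proof (rule ccontr)
      assume "v \<noteq> 1"
      then have "count p v = 1" using pp(4) v by blast
      then show False using v by simp
    qed
  qed
  then show "p \<in> {p\<in>H1set M. count p 1 \<noteq> 1 \<and> 1 \<in># p}" using pp p1 by (simp add: H1set_def)
qed

lemma H1_rec: assumes "M \<ge> 2"
  shows "card (H1set M) = card (H1set (M-1)) + card (H1set (M-2)) + card (DD M)"
proof -
  have f: "finite {p\<in>H1set M. count p 1 \<noteq> 1}" by (rule finite_subset[OF _ H1set_fin[of M]]) auto
  have "card (H1set M) = card {p\<in>H1set M. count p 1 = 1} + card {p\<in>H1set M. count p 1 \<noteq> 1}"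
    using card_split[OF H1set_fin, of M "\<lambda>p. count p 1 = 1"] by simp
  moreover have "card {p\<in>H1set M. count p 1 \<noteq> 1} =
      card {p\<in>{p\<in>H1set M. count p 1 \<noteq> 1}. 1 \<in># p} + card {p\<in>{p\<in>H1set M. count p 1 \<noteq> 1}. 1 \<notin># p}"
    by (rule card_split[OF f])
  moreover have "{p\<in>{p\<in>H1set M. count p 1 \<noteq> 1}. 1 \<in># p} = DD M"
    using H1C[of M] by auto
  moreover have "{p\<in>{p\<in>H1set M. count p 1 \<noteq> 1}. 1 \<notin># p} = {p\<in>H1set M. 1 \<notin># p}"
    by (auto simp: not_in_iff)
  moreover have "card {p\<in>H1set M. count p 1 = 1} = card (H1set (M-2))"
    using bij_betw_same_card[OF H1A[OF assms]] by simp
  moreover have "card {p\<in>H1set M. 1 \<notin># p} = card (H1set (M-1))"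
    using bij_betw_same_card[OF H1B] by simp
  ultimately show ?thesis by simp
qed

lemma DA: "bij_betw (add_mset 1) (DD (M-1)) {p\<in>DD M. count p 1 \<noteq> 2}"
proof (rule bij_betw_byWitness[where f'="\<lambda>p. p - {#1#}"])
  show "\<forall>a\<in>DD (M - 1). add_mset 1 a - {#1#} = a" by simp
  show "\<forall>a'\<in>{p\<in>DD M. count p 1 \<noteq> 2}. add_mset 1 (a' - {#1#}) = a'"
  proof
    fix p assume "p \<in> {p\<in>DD M. count p 1 \<noteq> 2}"
    then have "1 \<in># p" by (auto simp: DD_def count_inI)
    then show "add_mset 1 (p - {#1#}) = p" by simp
  qed
  show "add_mset 1 ` DD (M - 1) \<subseteq> {p\<in>DD M. count p 1 \<noteq> 2}"
  proof
    fix p assume "p \<in> add_mset 1 ` DD (M - 1)"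
    then obtain q where p: "p = add_mset 1 q" and q: "q \<in> DD (M-1)" by auto
    from q have qp: "is_partition q" "perimeter q = M - 1" "2 \<le> count q 1"
      "\<forall>x\<in>#q. x \<noteq> 1 \<longrightarrow> count q x = 1" by (auto simp: DD_def)
    have "perimeter q \<ge> 1" using perim_ge1[OF qp(1)] by simp
    moreover have "perimeter p = perimeter q + 1" using perim_add1[OF qp(1)] p by simp
    ultimately have "perimeter p = M" using qp(2) by linarith
    moreover have "is_partition p" using part_add[OF qp(1), of 1] p by simp
    moreover have "count p 1 = count q 1 + 1" using p by simp
    moreover have "\<forall>x\<in>#p. x \<noteq> 1 \<longrightarrow> count p x = 1"
    proof (intro ballI impI)
      fix x assume x: "x \<in># p" "x \<noteq> 1"
      then have xq: "x \<in># q" and cc: "count p x = count q x" using p by auto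
      have "x \<noteq> 1 \<longrightarrow> count q x = 1" by (rule bspec[OF qp(4) xq])
      then show "count p x = 1" using x(2) cc by simp
    qed
    moreover have "1 \<in># q" using qp(3) by (simp add: count_inI)
    ultimately show "p \<in> {p\<in>DD M. count p 1 \<noteq> 2}" using qp(3) by (simp add: DD_def)
  qed
  show "(\<lambda>p. p - {#1#}) ` {p\<in>DD M. count p 1 \<noteq> 2} \<subseteq> DD (M - 1)"
  proof
    fix q assume "q \<in> (\<lambda>p. p - {#1#}) ` {p\<in>DD M. count p 1 \<noteq> 2}"
    then obtain p where q: "q = p - {#1#}" and p: "p \<in> DD M" "count p 1 \<noteq> 2" by auto
    from p have pp: "is_partition p" "perimeter p = M" "2 \<le> count p 1"
      "\<forall>x\<in>#p. x \<noteq> 1 \<longrightarrow> count p x = 1" by (auto simp: DD_def)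
    have p1: "1 \<in># p" using pp(3) by (simp add: count_inI)
    have pq: "p = add_mset 1 q" using p1 q by simp
    have cq: "count q 1 = count p 1 - 1" using q by simp
    then have c2: "2 \<le> count q 1" using pp(3) p(2) by linarith
    then have "1 \<in># q" by (simp add: count_inI)
    then have qne: "q \<noteq> {#}" by auto
    have qpart: "is_partition q" using pp(1) qne pq by (auto simp: is_partition_def)
    have "perimeter q = M - 1" using perim_add1[OF qpart] pp(2) pq by simp
    moreover have "\<forall>x\<in>#q. x \<noteq> 1 \<longrightarrow> count q x = 1"
    proof (intro ballI impI)
      fix x assume x: "x \<in># q" "x \<noteq> 1"
      then have xp: "x \<in># p" and cc: "count p x = count q x" using pq by auto
      have "x \<noteq> 1 \<longrightarrow> count p x = 1" by (rule bspec[OF pp(4) xp])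
      then show "count q x = 1" using x(2) cc by simp
    qed
    ultimately show "q \<in> DD (M-1)" using qpart c2 by (simp add: DD_def)
  qed
qed

lemma DB: "bij_betw (add_mset 1) {q\<in>Hset (M-1). 1 \<in># q} {p\<in>DD M. count p 1 = 2}"
proof (rule bij_betw_byWitness[where f'="\<lambda>p. p - {#1#}"])
  show "\<forall>a\<in>{q\<in>Hset (M-1). 1 \<in># q}. add_mset 1 a - {#1#} = a" by simp
  show "\<forall>a'\<in>{p\<in>DD M. count p 1 = 2}. add_mset 1 (a' - {#1#}) = a'"
  proof
    fix p assume "p \<in> {p\<in>DD M. count p 1 = 2}"
    then have "1 \<in># p" by (auto simp: count_inI)
    then show "add_mset 1 (p - {#1#}) = p" by simp
  qed
  show "add_mset 1 ` {q\<in>Hset (M-1). 1 \<in># q} \<subseteq> {p\<in>DD M. count p 1 = 2}"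
  proof
    fix p assume "p \<in> add_mset 1 ` {q\<in>Hset (M-1). 1 \<in># q}"
    then obtain q where p: "p = add_mset 1 q" and q: "q \<in> Hset (M-1)" "1 \<in># q" by auto
    from q have qp: "is_partition q" "\<forall>x\<in>#q. count q x = 1" "perimeter q = M - 1" by (auto simp: Hset_def)
    have "perimeter q \<ge> 1" using perim_ge1[OF qp(1)] by simp
    moreover have "perimeter p = perimeter q + 1" using perim_add1[OF qp(1)] p by simp
    ultimately have "perimeter p = M" using qp(3) by linarith
    moreover have "is_partition p" using part_add[OF qp(1), of 1] p by simp
    moreover have "count q 1 = 1" using qp(2) q(2) by blast
    then have "count p 1 = 2" using p by simp
    moreover have "\<forall>x\<in>#p. x \<noteq> 1 \<longrightarrow> count p x = 1"
    proof (intro ballI impI)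
      fix x assume x: "x \<in># p" "x \<noteq> 1"
      then have xq: "x \<in># q" and cc: "count p x = count q x" using p by auto
      have "count q x = 1" by (rule bspec[OF qp(2) xq])
      then show "count p x = 1" using cc by simp
    qed
    ultimately show "p \<in> {p\<in>DD M. count p 1 = 2}" by (simp add: DD_def)
  qed
  show "(\<lambda>p. p - {#1#}) ` {p\<in>DD M. count p 1 = 2} \<subseteq> {q\<in>Hset (M-1). 1 \<in># q}"
  proof
    fix q assume "q \<in> (\<lambda>p. p - {#1#}) ` {p\<in>DD M. count p 1 = 2}"
    then obtain p where q: "q = p - {#1#}" and p: "p \<in> DD M" "count p 1 = 2" by auto
    from p have pp: "is_partition p" "perimeter p = M"
      "\<forall>x\<in>#p. x \<noteq> 1 \<longrightarrow> count p x = 1" by (auto simp: DD_def)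
    have p1: "1 \<in># p" using p(2) by (simp add: count_inI)
    have pq: "p = add_mset 1 q" using p1 q by simp
    have c1: "count q 1 = 1" using q p(2) by simp
    then have q1: "1 \<in># q" by (simp add: count_inI)
    then have qne: "q \<noteq> {#}" by auto
    have qpart: "is_partition q" using pp(1) qne pq by (auto simp: is_partition_def)
    have "perimeter q = M - 1" using perim_add1[OF qpart] pp(2) pq by simp
    moreover have "\<forall>x\<in>#q. count q x = 1"
    proof
      fix x assume x: "x \<in># q"
      show "count q x = 1"
      proof (cases "x = 1")
        case True then show ?thesis using c1 by simp
      next
        case False
        then have xp: "x \<in># p" and cc: "count p x = count q x" using pq x by auto
        have "x \<noteq> 1 \<longrightarrow> count p x = 1" by (rule bspec[OF pp(3) xp])
        then show ?thesis using False cc by simp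
      qed
    qed
    ultimately show "q \<in> {q\<in>Hset (M-1). 1 \<in># q}" using qpart q1 by (simp add: Hset_def)
  qed
qed

lemma DD1: "DD 1 = {}"
proof -
  have "p \<notin> DD 1" for p
  proof
    assume "p \<in> DD 1"
    then have "is_partition p" "perimeter p = 1" "2 \<le> count p 1" by (auto simp: DD_def)
    then show False using part_one by fastforce
  qed
  then show ?thesis by blast
qed

lemma DD_rec: "card (DD M) = card (DD (M-1)) + card {q\<in>Hset (M-1). 1 \<in># q}"
  using card_split[OF DD_fin, of M "\<lambda>p. count p 1 = 2"] bij_betw_same_card[OF DA[of M]]
    bij_betw_same_card[OF DB[of M]] by simp

lemma H1one: "card {q\<in>Hset 1. 1 \<in># q} = 1"
proof -
  have "{q\<in>Hset 1. 1 \<in># q} = {{#1#}}" unfolding Hset1 by auto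
  then show ?thesis by simp
qed

lemma DD_card: "card (DD (Suc n)) = fib n"
proof (induction n rule: fib.induct)
  case 1 then show ?case by (simp add: DD1[unfolded One_nat_def])
next
  case 2
  have "card (DD 2) = card (DD 1) + card {q\<in>Hset 1. 1 \<in># q}" using DD_rec[of 2] by simp
  then have "card (DD 2) = 1" using H1one DD1 by simp
  then show ?case by (simp add: numeral_2_eq_2)
next
  case (3 m)
  have "card {q\<in>Hset (Suc (Suc m)). 1 \<in># q} = card (Hset m)"
    using bij_betw_same_card[OF HA[of "Suc (Suc m)"]] by simp
  then have "card (DD (Suc (Suc (Suc m)))) = card (DD (Suc (Suc m))) + card (Hset m)"
    using DD_rec[of "Suc (Suc (Suc m))"] by simp
  then show ?case using 3 H_card by simp
qed

lemma h1_formula: "h1 M = conv M"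
proof (induction M rule: fib.induct)
  case 1 then show ?case by (simp add: h1_def H1set0 conv_def)
next
  case 2 then show ?case by (simp add: h1_def H1set1[unfolded One_nat_def] conv_def)
next
  case (3 n)
  have "h1 (Suc (Suc n)) = h1 (Suc n) + h1 n + fib (Suc n)"
    using H1_rec[of "Suc (Suc n)"] DD_card[of "Suc n"] by (simp add: h1_def)
  then show ?case using 3 conv_rec[of n] by simp
qed



lemma conv_int: "int (conv n) = (\<Sum>k=1..n-1. int (fib k) * int (fib (n - k)))"
proof (cases n)
  case 0 then show ?thesis by (simp add: conv_def)
next
  case (Suc m)
  have "{1..<n} = {1..n-1}" using Suc by auto
  then show ?thesis unfolding conv_def by (simp add: of_nat_sum)
qed

theorem mainTheorem6:
  fixes M :: nat
  assumes "M \<ge> 2"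
  shows "(int (g M) = int (fib M) + (\<Sum>k=1..M-1. int (fib k) * int (fib (M - k))))
    \<and> (int (h M) = int (fib M) + (\<Sum>k=1..M-2. int (fib k) * int (fib (M - 1 - k))))
    \<and> (int (g1 M) = (\<Sum>k=1..M-1. int (fib k) * int (fib (M - k))))
    \<and> (int (h1 M) = (\<Sum>k=1..M-1. int (fib k) * int (fib (M - k))))
    \<and> (int (g M) - int (h M) = int (g1 M) - int (g1 (M - 1)))
    \<and> (int (g1 M) - int (g1 (M - 1)) = int (h1 M) - int (h1 (M - 1)))
    \<and> (int (h1 M) - int (h1 (M - 1)) =
           int (fib (M - 1)) + (\<Sum>k=1..M-3. int (fib k) * int (fib (M - 2 - k))))"
proof -
  obtain n where M: "M = Suc (Suc n)" using assms by (metis add_2_eq_Suc le_Suc_ex)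
  have e1: "(\<Sum>k=1..M-1. int (fib k) * int (fib (M - k))) = int (conv M)" using conv_int[of M] by simp
  have e2: "(\<Sum>k=1..M-2. int (fib k) * int (fib (M - 1 - k))) = int (conv (M-1))"
    using conv_int[of "M-1"] by (simp add: M)
  have e3: "(\<Sum>k=1..M-3. int (fib k) * int (fib (M - 2 - k))) = int (conv (M-2))"
    using conv_int[of "M-2"] by (simp add: M numeral_3_eq_3)
  have gM: "g M = fib M + conv M" by (rule g_formula)
  have hM: "h M = fib M + conv (M-1)" using h_formula[of "Suc n"] by (simp add: M)
  have cr: "conv M = conv (M-1) + conv (M-2) + fib (M-1)" using conv_rec[of n] by (simp add: M)
  show ?thesis unfolding e1 e2 e3 gM hM g1_formula h1_formula using cr by simp
qed

end
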